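(* Let $n\ge 2$ and $f=(f_1,\dots,f_n):\mathbb{R}^n\to\mathbb{R}^n$. Then $f$ is a Laplacian map if and only if $f$ is a gradient map $f=\nabla\bar g$, where $\bar g(x_1,\dots,x_n)=g(x_1-x_n,\dots,x_{n-1}-x_n)+k x_n$ for some $g\in C^2(\mathbb{R}^{n-1})$ and some constant $k\in\mathbb{R}$.
   Context: A real $n\times n$ matrix $L=(l_{ij})$ is a Laplacian matrix if it is symmetric and $l_{ii}=-\sum_{j\neq i} l_{ij}$ for $i=1,\dots,n$. A map $f:\mathbb{R}^n\to\mathbb{R}^n$ of class $C^1$ is a Laplacian map if its Jacobian matrix $Jf(x)$ is a Laplacian matrix for every $x\in\mathbb{R}^n$. *)

theory Defs
  imports "HOL-Analysis.Analysis"
begin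

definition laplacian_matrix :: "real^'n^'n \<Rightarrow> bool" where
  "laplacian_matrix L \<longleftrightarrow> transpose L = L \<and>
     (\<forall>i. L $ i $ i = - (\<Sum>j\<in>UNIV - {i}. L $ i $ j))"

definition C1_map :: "(real^'n \<Rightarrow> real^'m) \<Rightarrow> bool" where
  "C1_map f \<longleftrightarrow> (\<forall>x. f differentiable (at x)) \<and>
     continuous_on UNIV (\<lambda>x. jacobian f (at x))"

definition laplacian_map :: "(real^'n \<Rightarrow> real^'n) \<Rightarrow> bool" where
  "laplacian_map f \<longleftrightarrow> C1_map f \<and> (\<forall>x. laplacian_matrix (jacobian f (at x)))"

definition grad :: "(real^'n \<Rightarrow> real) \<Rightarrow> real^'n \<Rightarrow> real^'n" where
  "grad g x = (\<chi> i. frechet_derivative g (at x) (axis i 1))"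

definition C2_fun :: "(real^'n \<Rightarrow> real) \<Rightarrow> bool" where
  "C2_fun g \<longleftrightarrow> (\<forall>x. g differentiable (at x)) \<and> C1_map (grad g)"

end

theory Submission
  imports Defs
begin

lemma jacobian_at_eq:
  fixes f :: "real^'n \<Rightarrow> real^'m"
  assumes "(f has_derivative (\<lambda>h. A *v h)) (at x)"
  shows "jacobian f (at x) = A"
proof -
  have "frechet_derivative f (at x) = (\<lambda>h. A *v h)"
    using frechet_derivative_at[OF assms] by (rule sym)
  then show ?thesis unfolding jacobian_def by simp
qed

lemma matrix_add_rdistrib': "(B + C) ** (A::real^'p^'n) = B ** A + C ** A"
  by (vector matrix_matrix_mult_def sum.distrib[symmetric] field_simps)

lemma lin_mm: "linear (\<lambda>M::real^'n^'m. (A::real^'m^'p) ** M ** (B::real^'q^'n))"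
proof (rule linearI)
  fix M N :: "real^'n^'m" and c :: real
  show "A ** (M + N) ** B = A ** M ** B + A ** N ** B"
    by (simp add: matrix_add_ldistrib matrix_add_rdistrib')
  show "A ** (c *\<^sub>R M) ** B = c *\<^sub>R (A ** M ** B)"
    by (simp add: matrix_scalar_ac scalar_matrix_assoc)
qed

lemma C1_comp_deriv:
  fixes F :: "real^'a \<Rightarrow> real^'b" and A :: "real^'b^'c" and B :: "real^'d^'a"
  assumes "C1_map F"
  shows "((\<lambda>x. A *v F (B *v x) + c) has_derivative (\<lambda>h. (A ** jacobian F (at (B *v x)) ** B) *v h)) (at x)"
proof -
  have "F differentiable (at (B *v x))" using assms by (simp add: C1_map_def)
  then have d: "(F has_derivative (\<lambda>h. jacobian F (at (B *v x)) *v h)) (at (B *v x))"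
    by (simp add: jacobian_works)
  have bB: "bounded_linear (\<lambda>x. B *v x)" and bA: "bounded_linear (\<lambda>x. A *v x)"
    by (simp_all add: linear_conv_bounded_linear[symmetric] matrix_vector_mul_linear)
  have "((\<lambda>x. B *v x) has_derivative (\<lambda>h. B *v h)) (at x)"
    by (rule bounded_linear_imp_has_derivative[OF bB])
  from diff_chain_at[OF this d]
  have "((\<lambda>x. F (B *v x)) has_derivative (\<lambda>h. jacobian F (at (B *v x)) *v (B *v h))) (at x)"
    by (simp add: o_def)
  from bounded_linear.has_derivative[OF bA this]
  have "((\<lambda>x. A *v F (B *v x)) has_derivative (\<lambda>h. A *v (jacobian F (at (B *v x)) *v (B *v h)))) (at x)" .
  from has_derivative_add_const[OF this, of c]
  show ?thesis by (simp add: matrix_vector_mul_assoc matrix_mul_assoc)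
qed

lemma C1_comp:
  fixes F :: "real^'a \<Rightarrow> real^'b" and A :: "real^'b^'c" and B :: "real^'d^'a"
  assumes "C1_map F"
  shows "C1_map (\<lambda>x. A *v F (B *v x) + c)"
    and "jacobian (\<lambda>x. A *v F (B *v x) + c) (at x) = A ** jacobian F (at (B *v x)) ** B"
proof -
  have J: "jacobian (\<lambda>x. A *v F (B *v x) + c) (at y) = A ** jacobian F (at (B *v y)) ** B" for y
    by (rule jacobian_at_eq[OF C1_comp_deriv[OF assms]])
  then show "jacobian (\<lambda>x. A *v F (B *v x) + c) (at x) = A ** jacobian F (at (B *v x)) ** B" .
  have c1: "continuous_on UNIV (\<lambda>x. jacobian F (at x))" using assms by (simp add: C1_map_def)
  have c2: "continuous_on UNIV (\<lambda>y. jacobian F (at (B *v y)))"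
    by (rule continuous_on_compose2[OF c1]) (auto intro!: continuous_intros)
  have c3: "continuous_on UNIV (\<lambda>M::real^'a^'b. A ** M ** B)"
    using lin_mm[of A B] by (simp add: linear_continuous_on linear_conv_bounded_linear)
  have "continuous_on UNIV (\<lambda>y. A ** jacobian F (at (B *v y)) ** B)"
    by (rule continuous_on_compose2[OF c3 c2]) auto
  then show "C1_map (\<lambda>x. A *v F (B *v x) + c)"
    unfolding C1_map_def using C1_comp_deriv[OF assms, of A B c] J
    by (auto simp: differentiable_def)
qed

lemma line_deriv:
  fixes G :: "real^'n \<Rightarrow> real"
  assumes "\<And>y. (G has_derivative (\<lambda>h. F y \<bullet> h)) (at y)"
  shows "((\<lambda>u. G (p + u *\<^sub>R a)) has_real_derivative (F (p + u *\<^sub>R a) \<bullet> a)) (at u)"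
proof -
  have l: "((\<lambda>u. p + u *\<^sub>R a) has_derivative (\<lambda>h. h *\<^sub>R a)) (at u)"
    by (auto intro!: derivative_eq_intros)
  from diff_chain_at[OF l assms]
  have "((\<lambda>u. G (p + u *\<^sub>R a)) has_derivative (\<lambda>h. F (p + u *\<^sub>R a) \<bullet> (h *\<^sub>R a))) (at u)"
    by (simp add: o_def)
  then show ?thesis unfolding has_field_derivative_def
    by (rule has_derivative_eq_rhs) (simp add: fun_eq_iff mult.commute)
qed

lemma line_deriv2:
  fixes F :: "real^'n \<Rightarrow> real^'n"
  assumes "C1_map F"
  shows "((\<lambda>v. F (p + v *\<^sub>R b) \<bullet> a) has_real_derivative ((jacobian F (at (p + v *\<^sub>R b)) *v b) \<bullet> a)) (at v)"
proof -
  have l: "((\<lambda>u. p + u *\<^sub>R b) has_derivative (\<lambda>h. h *\<^sub>R b)) (at v)"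
    by (auto intro!: derivative_eq_intros)
  have "F differentiable (at (p + v *\<^sub>R b))" using assms by (simp add: C1_map_def)
  then have d: "(F has_derivative (\<lambda>h. jacobian F (at (p + v *\<^sub>R b)) *v h)) (at (p + v *\<^sub>R b))"
    by (simp add: jacobian_works)
  from diff_chain_at[OF l d]
  have "((\<lambda>u. F (p + u *\<^sub>R b)) has_derivative (\<lambda>h. jacobian F (at (p + v *\<^sub>R b)) *v (h *\<^sub>R b))) (at v)"
    by (simp add: o_def)
  from has_derivative_inner_left[OF this, of a]
  show ?thesis unfolding has_field_derivative_def
    by (rule has_derivative_eq_rhs) (simp add: fun_eq_iff mult.commute matrix_vector_mult_scaleR)
qed

lemma mixed:
  fixes G :: "real^'n \<Rightarrow> real" and F :: "real^'n \<Rightarrow> real^'n"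
  assumes dG: "\<And>y. (G has_derivative (\<lambda>h. F y \<bullet> h)) (at y)" and C: "C1_map F" and s: "s > 0"
  shows "\<exists>p. norm (p - x) \<le> 2 * s \<and>
    G (x + s *\<^sub>R axis i 1 + s *\<^sub>R axis j 1) - G (x + s *\<^sub>R axis i 1) - G (x + s *\<^sub>R axis j 1) + G x
      = s^2 * jacobian F (at p) $ i $ j"
proof -
  define a where "a = (axis i 1 :: real^'n)"
  define b where "b = (axis j 1 :: real^'n)"
  define \<phi> where "\<phi> u = G ((x + s *\<^sub>R b) + u *\<^sub>R a) - G (x + u *\<^sub>R a)" for u
  have d\<phi>: "(\<phi> has_real_derivative (F ((x + s *\<^sub>R b) + u *\<^sub>R a) \<bullet> a - F (x + u *\<^sub>R a) \<bullet> a)) (at u)" for u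
    unfolding \<phi>_def by (intro DERIV_diff line_deriv dG)
  obtain \<xi> where \<xi>: "0 < \<xi>" "\<xi> < s"
    "\<phi> s - \<phi> 0 = (s - 0) * (F ((x + s *\<^sub>R b) + \<xi> *\<^sub>R a) \<bullet> a - F (x + \<xi> *\<^sub>R a) \<bullet> a)"
    using MVT2[OF s, of \<phi> "\<lambda>u. F ((x + s *\<^sub>R b) + u *\<^sub>R a) \<bullet> a - F (x + u *\<^sub>R a) \<bullet> a"] d\<phi> by blast
  define \<psi> where "\<psi> v = F ((x + \<xi> *\<^sub>R a) + v *\<^sub>R b) \<bullet> a" for v
  have d\<psi>: "(\<psi> has_real_derivative ((jacobian F (at ((x + \<xi> *\<^sub>R a) + v *\<^sub>R b)) *v b) \<bullet> a)) (at v)" for v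
    unfolding \<psi>_def by (rule line_deriv2[OF C])
  obtain \<eta> where \<eta>: "0 < \<eta>" "\<eta> < s"
    "\<psi> s - \<psi> 0 = (s - 0) * ((jacobian F (at ((x + \<xi> *\<^sub>R a) + \<eta> *\<^sub>R b)) *v b) \<bullet> a)"
    using MVT2[OF s, of \<psi> "\<lambda>v. (jacobian F (at ((x + \<xi> *\<^sub>R a) + v *\<^sub>R b)) *v b) \<bullet> a"] d\<psi> by blast
  have e1: "\<psi> s - \<psi> 0 = F ((x + s *\<^sub>R b) + \<xi> *\<^sub>R a) \<bullet> a - F (x + \<xi> *\<^sub>R a) \<bullet> a"
    unfolding \<psi>_def by (simp add: add_ac)
  have e2: "G (x + s *\<^sub>R a + s *\<^sub>R b) - G (x + s *\<^sub>R a) - G (x + s *\<^sub>R b) + G x = \<phi> s - \<phi> 0"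
    unfolding \<phi>_def by (simp add: add_ac)
  have e3: "(jacobian F (at p) *v b) \<bullet> a = jacobian F (at p) $ i $ j" for p
    by (simp add: a_def b_def matrix_vector_mult_basis column_def inner_axis)
  have na: "norm a = 1" "norm b = 1" by (simp_all add: a_def b_def)
  show ?thesis
  proof (intro exI conjI)
    have "norm ((x + \<xi> *\<^sub>R a + \<eta> *\<^sub>R b) - x) = norm (\<xi> *\<^sub>R a + \<eta> *\<^sub>R b)" by simp
    also have "\<dots> \<le> norm (\<xi> *\<^sub>R a) + norm (\<eta> *\<^sub>R b)"
      by (rule norm_triangle_ineq)
    also have "\<dots> = \<xi> + \<eta>" using na \<xi> \<eta> by simp
    finally show "norm ((x + \<xi> *\<^sub>R a + \<eta> *\<^sub>R b) - x) \<le> 2 * s" using \<xi> \<eta> by simp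
    show "G (x + s *\<^sub>R axis i 1 + s *\<^sub>R axis j 1) - G (x + s *\<^sub>R axis i 1) - G (x + s *\<^sub>R axis j 1) + G x
      = s^2 * jacobian F (at (x + \<xi> *\<^sub>R a + \<eta> *\<^sub>R b)) $ i $ j"
      using e2 \<xi>(3) e1 \<eta>(3) e3 by (simp add: power2_eq_square a_def b_def)
  qed
qed

lemma comp_le_dist: "\<bar>M $ k $ l - N $ k $ l\<bar> \<le> dist M (N::real^'a^'b)"
proof -
  have "\<bar>M $ k $ l - N $ k $ l\<bar> = norm ((M - N) $ k $ l)" by simp
  also have "\<dots> \<le> norm ((M - N) $ k)" by (rule Finite_Cartesian_Product.norm_nth_le)
  also have "\<dots> \<le> norm (M - N)" by (rule Finite_Cartesian_Product.norm_nth_le)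
  finally show ?thesis by (simp add: dist_norm)
qed

lemma clairaut:
  fixes G :: "real^'n \<Rightarrow> real" and F :: "real^'n \<Rightarrow> real^'n"
  assumes dG: "\<And>y. (G has_derivative (\<lambda>h. F y \<bullet> h)) (at y)" and C: "C1_map F"
  shows "jacobian F (at x) $ i $ j = jacobian F (at x) $ j $ i"
proof (rule ccontr)
  let ?J = "\<lambda>y. jacobian F (at y)"
  assume ne: "?J x $ i $ j \<noteq> ?J x $ j $ i"
  define d where "d = \<bar>?J x $ i $ j - ?J x $ j $ i\<bar>"
  have d: "d > 0" using ne by (simp add: d_def)
  have "continuous (at x) ?J" using C
    by (metis C1_map_def continuous_on_eq_continuous_at open_UNIV UNIV_I)
  then have "\<forall>e>0. \<exists>\<delta>>0. \<forall>y. dist y x < \<delta> \<longrightarrow> dist (?J y) (?J x) < e"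
    unfolding continuous_at_eps_delta .
  moreover have "d/2 > 0" using d by simp
  ultimately obtain \<delta> where \<delta>: "\<delta> > 0" "\<And>y. dist y x < \<delta> \<Longrightarrow> dist (?J y) (?J x) < d/2"
    by blast
  define s where "s = \<delta>/4"
  have s: "s > 0" using \<delta> by (simp add: s_def)
  obtain p where p: "norm (p - x) \<le> 2 * s"
    "G (x + s *\<^sub>R axis i 1 + s *\<^sub>R axis j 1) - G (x + s *\<^sub>R axis i 1) - G (x + s *\<^sub>R axis j 1) + G x
      = s^2 * ?J p $ i $ j"
    using mixed[OF dG C s, of x i j] by blast
  obtain q where q: "norm (q - x) \<le> 2 * s"
    "G (x + s *\<^sub>R axis j 1 + s *\<^sub>R axis i 1) - G (x + s *\<^sub>R axis j 1) - G (x + s *\<^sub>R axis i 1) + G x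
      = s^2 * ?J q $ j $ i"
    using mixed[OF dG C s, of x j i] by blast
  have sw: "x + s *\<^sub>R axis j 1 + s *\<^sub>R axis i 1 = x + s *\<^sub>R axis i 1 + s *\<^sub>R axis j 1"
    by (simp add: add_ac)
  have "s^2 * ?J p $ i $ j = s^2 * ?J q $ j $ i"
    using p(2) q(2) unfolding sw by linarith
  then have pq: "?J p $ i $ j = ?J q $ j $ i" using s by simp
  have "dist p x < \<delta>" "dist q x < \<delta>" using p(1) q(1) s \<delta> by (simp_all add: dist_norm s_def)
  then have "dist (?J p) (?J x) < d/2" "dist (?J q) (?J x) < d/2" using \<delta> by auto
  then have "\<bar>?J p $ i $ j - ?J x $ i $ j\<bar> < d/2" "\<bar>?J q $ j $ i - ?J x $ j $ i\<bar> < d/2"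
    using comp_le_dist[of "?J p" i j "?J x"] comp_le_dist[of "?J q" j i "?J x"] by linarith+
  then show False using pq d_def by linarith
qed

lemma sym_inner:
  fixes A :: "real^'n^'n"
  assumes "transpose A = A"
  shows "(A *v h) \<bullet> x = h \<bullet> (A *v x)"
proof -
  have "(A *v h) \<bullet> x = x \<bullet> (A *v h)" by (simp add: inner_commute)
  also have "\<dots> = (x v* A) \<bullet> h" by (simp add: dot_lmul_matrix)
  also have "\<dots> = (x v* transpose A) \<bullet> h" using assms by simp
  also have "\<dots> = h \<bullet> (A *v x)" by (simp add: inner_commute)
  finally show ?thesis .
qed

lemma cont_mv:
  fixes M :: "'a::topological_space \<Rightarrow> real^'n^'m"
  assumes "continuous_on S M" "continuous_on S v"
  shows "continuous_on S (\<lambda>z. M z *v v z)"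
  unfolding matrix_vector_mult_def by (intro continuous_intros assms)

lemma poincare:
  fixes f :: "real^'n \<Rightarrow> real^'n"
  assumes C: "C1_map f" and S: "\<And>y. transpose (jacobian f (at y)) = jacobian f (at y)"
  shows "((\<lambda>x. integral {0..1} (\<lambda>t. f (t *\<^sub>R x) \<bullet> x)) has_derivative (\<lambda>h. f x \<bullet> h)) (at x)"
proof -
  let ?J = "\<lambda>y. jacobian f (at y)"
  define V where "V x t = t *\<^sub>R (?J (t *\<^sub>R x) *v x) + f (t *\<^sub>R x)" for x and t :: real
  have cJ: "continuous_on UNIV ?J" using C by (simp add: C1_map_def)
  have df: "(f has_derivative (\<lambda>h. ?J y *v h)) (at y)" for y
    using C by (simp add: C1_map_def jacobian_works)
  have cf: "continuous_on UNIV f"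
    by (meson continuous_at_imp_continuous_on df has_derivative_continuous)
  have cJ2: "continuous_on S (\<lambda>z. ?J (a z))" if "continuous_on S a" for S a
    by (rule continuous_on_compose2[OF cJ that]) auto
  have cf2: "continuous_on S (\<lambda>z. f (a z))" if "continuous_on S a" for S a
    by (rule continuous_on_compose2[OF cf that]) auto
  have cV: "continuous_on S (\<lambda>z. V (fst z) (snd z))" for S
    unfolding V_def
    by (intro continuous_intros cont_mv cJ2 cf2)
  have cVt: "continuous_on S (\<lambda>t. V x t)" for S x
    unfolding V_def
    by (intro continuous_intros cont_mv cJ2 cf2)
  have deriv_x: "((\<lambda>x. f (t *\<^sub>R x) \<bullet> x) has_derivative blinfun_inner_left (V x t)) (at x within UNIV)"
    for x t
  proof -
    have l: "((\<lambda>x. t *\<^sub>R x) has_derivative (\<lambda>h. t *\<^sub>R h)) (at x)"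
      by (auto intro!: derivative_eq_intros)
    from diff_chain_at[OF l df]
    have d1: "((\<lambda>x. f (t *\<^sub>R x)) has_derivative (\<lambda>h. ?J (t *\<^sub>R x) *v (t *\<^sub>R h))) (at x)"
      by (simp add: o_def)
    from has_derivative_inner[OF d1 has_derivative_ident]
    have "((\<lambda>x. f (t *\<^sub>R x) \<bullet> x) has_derivative
        (\<lambda>h. f (t *\<^sub>R x) \<bullet> h + (?J (t *\<^sub>R x) *v (t *\<^sub>R h)) \<bullet> x)) (at x)" .
    moreover have "(\<lambda>h. f (t *\<^sub>R x) \<bullet> h + (?J (t *\<^sub>R x) *v (t *\<^sub>R h)) \<bullet> x) = blinfun_apply (blinfun_inner_left (V x t))"
        using sym_inner[OF S[of "t *\<^sub>R x"]]
        by (simp add: fun_eq_iff V_def matrix_vector_mult_scaleR inner_add_right inner_commute)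
    ultimately show ?thesis by simp
  qed
  have integ: "(\<lambda>t. f (t *\<^sub>R x) \<bullet> x) integrable_on cbox 0 1" for x :: "real^'n"
    unfolding box_real
    by (intro integrable_continuous_interval continuous_intros cf2)
  have cfx: "continuous_on (UNIV \<times> cbox 0 1) (\<lambda>(x, t). blinfun_inner_left (V x t))"
  proof -
    have "continuous_on (UNIV \<times> cbox 0 1) (\<lambda>z. blinfun_inner_left (V (fst z) (snd z)))"
      by (rule continuous_on_compose2[OF linear_continuous_on[OF bounded_linear_blinfun_inner_left] cV]) auto
    then show ?thesis by (simp add: case_prod_beta')
  qed
  have L: "((\<lambda>x. integral (cbox 0 1) (\<lambda>t. f (t *\<^sub>R x) \<bullet> x)) has_derivative
      blinfun_apply (integral (cbox 0 1) (\<lambda>t. blinfun_inner_left (V x t)))) (at x within UNIV)"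
    apply (rule leibniz_rule[where fx="\<lambda>x t. blinfun_inner_left (V x t)"])
        apply (rule deriv_x)
       apply (rule integ)
      apply (rule cfx)
     apply simp
    apply simp
    done
  have iV: "(\<lambda>t. blinfun_inner_left (V x t)) integrable_on cbox 0 1"
    unfolding box_real
    by (intro integrable_continuous_interval continuous_on_compose2[OF linear_continuous_on[OF bounded_linear_blinfun_inner_left] cVt]) auto
  have val: "blinfun_apply (integral (cbox 0 1) (\<lambda>t. blinfun_inner_left (V x t))) h = f x \<bullet> h" for h
  proof -
    have "blinfun_apply (integral (cbox 0 1) (\<lambda>t. blinfun_inner_left (V x t))) h
        = integral {0..1} (\<lambda>t. h \<bullet> V x t)"
      using blinfun_apply_integral[OF iV, of h] by simp
    also have "\<dots> = f x \<bullet> h"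
    proof -
      define w where "w t = t * (f (t *\<^sub>R x) \<bullet> h)" for t :: real
      have dg: "((\<lambda>t. f (t *\<^sub>R x) \<bullet> h) has_real_derivative ((?J (t *\<^sub>R x) *v x) \<bullet> h)) (at t)" for t
        using line_deriv2[OF C, where p=0 and b=x and v=t and a=h] by simp
      have dw: "(w has_real_derivative (h \<bullet> V x t)) (at t)" for t
      proof -
        have "(w has_real_derivative (1 * (f (t *\<^sub>R x) \<bullet> h) + ((?J (t *\<^sub>R x) *v x) \<bullet> h) * t)) (at t)"
          unfolding w_def by (intro DERIV_mult DERIV_ident dg)
        then show ?thesis
          by (simp add: V_def inner_add_right inner_commute algebra_simps)
      qed
      have "((\<lambda>t. h \<bullet> V x t) has_integral (w 1 - w 0)) {0..1}"
        by (rule fundamental_theorem_of_calculus)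
           (auto simp: has_real_derivative_iff_has_vector_derivative[symmetric]
                 intro: has_field_derivative_at_within dw)
      then show ?thesis by (simp add: integral_unique w_def)
    qed
    finally show ?thesis .
  qed
  have "blinfun_apply (integral (cbox 0 1) (\<lambda>t. blinfun_inner_left (V x t))) = (\<lambda>h. f x \<bullet> h)"
    by (rule ext) (rule val)
  with L show ?thesis by simp
qed

lemma matrix_works_real:
  fixes F :: "real^'n \<Rightarrow> real^'m"
  assumes "linear F"
  shows "matrix F *v x = F x"
  using matrix_works[of F x] assms by (simp add: linear_def scalar_mult_eq_scaleR)

lemma lin_grad:
  fixes D :: "real^'m \<Rightarrow> real"
  assumes "linear D"
  shows "D v = (\<chi> j. D (axis j 1)) \<bullet> v"
proof -
  have "v = (\<Sum>j\<in>UNIV. v $ j *\<^sub>R axis j 1)"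
    using basis_expansion[of v] by (simp add: scalar_mult_eq_scaleR)
  then have "D v = D (\<Sum>j\<in>UNIV. v $ j *\<^sub>R axis j 1)" by simp
  also have "\<dots> = (\<Sum>j\<in>UNIV. v $ j * D (axis j 1))"
    by (simp add: linear_sum[OF assms] linear_scale[OF assms])
  also have "\<dots> = (\<chi> j. D (axis j 1)) \<bullet> v"
    by (simp add: inner_vec_def mult.commute)
  finally show ?thesis .
qed

lemma vec_eq_by_inner:
  fixes a b :: "real^'n"
  assumes "\<And>h. a \<bullet> h = b \<bullet> h"
  shows "a = b"
proof -
  have "(a - b) \<bullet> (a - b) = 0" using assms[of "a - b"] by (simp add: inner_diff_left)
  then show ?thesis by simp
qed

definition Pmap :: "real^('m option) \<Rightarrow> real^'m" where
  "Pmap y = (\<chi> j. y $ Some j - y $ None)"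
definition Emap :: "real^'m \<Rightarrow> real^('m option)" where
  "Emap z = (\<chi> i. case i of None \<Rightarrow> 0 | Some j \<Rightarrow> z $ j)"
definition Rmap :: "real^('m option) \<Rightarrow> real^'m" where
  "Rmap w = (\<chi> j. w $ Some j)"
definition onev :: "real^'n" where "onev = (\<chi> i. 1)"

lemma lin_Pmap: "linear Pmap"
  by (rule linearI) (simp_all add: Pmap_def vec_eq_iff algebra_simps)
lemma lin_Emap: "linear Emap"
  by (rule linearI) (simp_all add: Emap_def vec_eq_iff split: option.split)
lemma lin_Rmap: "linear Rmap"
  by (rule linearI) (simp_all add: Rmap_def vec_eq_iff)

lemma Pmap_onev: "Pmap onev = 0"
  by (simp add: Pmap_def onev_def vec_eq_iff)

lemma EP: "Emap (Pmap y) + (y $ None) *\<^sub>R onev = y"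
  by (simp add: vec_eq_iff Emap_def Pmap_def onev_def split: option.split)

lemma Emap_axis: "Emap (axis j 1) = axis (Some j) 1"
  by (simp add: vec_eq_iff Emap_def axis_def split: option.split)

lemma mv_onev_sum: "(A *v onev) $ i = (\<Sum>j\<in>UNIV. A $ i $ j)"
  by (simp add: matrix_vector_mult_def onev_def)

lemma row_sum_iff:
  fixes A :: "real^'n^'n"
  shows "(A *v onev) $ i = 0 \<longleftrightarrow> A $ i $ i = - (\<Sum>j\<in>UNIV - {i}. A $ i $ j)"
proof -
  have "(A *v onev) $ i = A $ i $ i + (\<Sum>j\<in>UNIV - {i}. A $ i $ j)"
    by (simp add: mv_onev_sum sum.remove)
  then show ?thesis by linarith
qed

theorem theorem4p3:
  fixes f :: "real^('m::finite option) \<Rightarrow> real^('m option)"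
  shows "laplacian_map f \<longleftrightarrow>
    (\<exists>(g :: real^'m \<Rightarrow> real) (k :: real). C2_fun g \<and>
       (\<forall>x. ((\<lambda>y. g (\<chi> j. y $ Some j - y $ None) + k * y $ None)
              has_derivative (\<lambda>h. f x \<bullet> h)) (at x)))"
proof
  let ?J = "\<lambda>y. jacobian f (at y)"
  assume L: "laplacian_map f"
  then have C: "C1_map f" and Lm: "\<And>x. laplacian_matrix (?J x)"
    by (auto simp: laplacian_map_def)
  have S: "\<And>y. transpose (?J y) = ?J y" using Lm by (simp add: laplacian_matrix_def)
  have row: "?J y *v onev = 0" for y
    using Lm[of y] row_sum_iff[of "?J y"] by (simp add: laplacian_matrix_def vec_eq_iff)
  have df: "(f has_derivative (\<lambda>h. ?J y *v h)) (at y)" for y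
    using C by (simp add: C1_map_def jacobian_works)
  define G where "G x = integral {0..1} (\<lambda>t. f (t *\<^sub>R x) \<bullet> x)" for x
  have dG: "(G has_derivative (\<lambda>h. f x \<bullet> h)) (at x)" for x
    unfolding G_def by (rule poincare[OF C S])
  have "\<exists>c. \<forall>x\<in>UNIV. f x \<bullet> onev = c"
  proof (rule has_derivative_zero_constant)
    fix x :: "real^'m option"
    have "((\<lambda>x. f x \<bullet> onev) has_derivative (\<lambda>h. (?J x *v h) \<bullet> onev)) (at x)"
      by (rule bounded_linear.has_derivative[OF bounded_linear_inner_left df])
    moreover have "(\<lambda>h. (?J x *v h) \<bullet> onev) = (\<lambda>h. 0)"
      using sym_inner[OF S[of x]] row[of x] by (simp add: fun_eq_iff)
    ultimately show "((\<lambda>x. f x \<bullet> onev) has_derivative (\<lambda>h. 0)) (at x within UNIV)" by simp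
  qed simp
  then obtain k where k: "\<And>x. f x \<bullet> onev = k" by blast
  define g where "g z = G (Emap z)" for z
  have key: "G y = g (Pmap y) + k * y $ None" for y
  proof -
    define \<psi> where "\<psi> t = G (Emap (Pmap y) + t *\<^sub>R onev) - k * t" for t
    have "(\<psi> has_real_derivative 0) (at t)" for t
    proof -
      have "(\<psi> has_real_derivative (f (Emap (Pmap y) + t *\<^sub>R onev) \<bullet> onev - k * 1)) (at t)"
        unfolding \<psi>_def by (intro DERIV_diff line_deriv dG DERIV_cmult DERIV_ident)
      then show ?thesis by (simp add: k)
    qed
    then have "\<psi> (y $ None) = \<psi> 0" by (intro DERIV_isconst_all) auto
    then show ?thesis using EP[of y] by (simp add: \<psi>_def g_def)
  qed
  have Geq: "(\<lambda>y. g (\<chi> j. y $ Some j - y $ None) + k * y $ None) = G"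
    by (simp add: fun_eq_iff key Pmap_def)
  have dg: "(g has_derivative (\<lambda>v. f (Emap z) \<bullet> Emap v)) (at z)" for z
  proof -
    have geq: "g = (\<lambda>z. G (Emap z))" by (simp add: fun_eq_iff g_def)
    have "(Emap has_derivative Emap) (at z)"
      using lin_Emap linear_conv_bounded_linear bounded_linear_imp_has_derivative by blast
    from diff_chain_at[OF this dG] show ?thesis by (simp add: o_def geq)
  qed
  have gradg: "grad g = (\<lambda>z. matrix Rmap *v f (matrix Emap *v z) + 0)"
  proof
    fix z
    have fd: "frechet_derivative g (at z) = (\<lambda>v. f (Emap z) \<bullet> Emap v)"
      using frechet_derivative_at[OF dg] by (rule sym)
    have "grad g z = Rmap (f (Emap z))"
      by (simp add: grad_def fd Emap_axis inner_axis Rmap_def vec_eq_iff)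
    also have "\<dots> = matrix Rmap *v f (matrix Emap *v z) + 0"
      by (simp add: matrix_works_real[OF lin_Rmap] matrix_works_real[OF lin_Emap])
    finally show "grad g z = matrix Rmap *v f (matrix Emap *v z) + 0" .
  qed
  have "C1_map (\<lambda>z. matrix Rmap *v f (matrix Emap *v z) + 0)" by (rule C1_comp(1)[OF C])
  moreover have "\<forall>z. g differentiable (at z)" using dg by (blast intro: differentiableI)
  ultimately have C2: "C2_fun g" unfolding C2_fun_def gradg by blast
  have "\<forall>x. ((\<lambda>y. g (\<chi> j. y $ Some j - y $ None) + k * y $ None)
              has_derivative (\<lambda>h. f x \<bullet> h)) (at x)"
    unfolding Geq using dG by blast
  then show "\<exists>(g :: real^'m \<Rightarrow> real) (k :: real). C2_fun g \<and>
       (\<forall>x. ((\<lambda>y. g (\<chi> j. y $ Some j - y $ None) + k * y $ None)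
              has_derivative (\<lambda>h. f x \<bullet> h)) (at x))"
    using C2 by blast
next
  let ?J = "\<lambda>y. jacobian f (at y)"
  assume "\<exists>(g :: real^'m \<Rightarrow> real) (k :: real). C2_fun g \<and>
       (\<forall>x. ((\<lambda>y. g (\<chi> j. y $ Some j - y $ None) + k * y $ None)
              has_derivative (\<lambda>h. f x \<bullet> h)) (at x))"
  then obtain g k where g: "C2_fun g" and H0: "\<And>x. ((\<lambda>y. g (\<chi> j. y $ Some j - y $ None) + k * y $ None)
              has_derivative (\<lambda>h. f x \<bullet> h)) (at x)" by blast
  define Gf where "Gf y = g (Pmap y) + k * y $ None" for y
  have H: "(Gf has_derivative (\<lambda>h. f x \<bullet> h)) (at x)" for x
  proof -
    have "Gf = (\<lambda>y. g (\<chi> j. y $ Some j - y $ None) + k * y $ None)"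
      by (simp add: fun_eq_iff Gf_def Pmap_def)
    then show ?thesis using H0[of x] by simp
  qed
  have dgg: "(g has_derivative (\<lambda>v. grad g z \<bullet> v)) (at z)" for z
  proof -
    have "g differentiable (at z)" using g by (simp add: C2_fun_def)
    then have d: "(g has_derivative frechet_derivative g (at z)) (at z)"
      by (simp add: frechet_derivative_works)
    have lin: "linear (frechet_derivative g (at z))"
      using d by (rule has_derivative_linear)
    have "frechet_derivative g (at z) = (\<lambda>v. grad g z \<bullet> v)"
    proof (rule ext)
      fix v show "frechet_derivative g (at z) v = grad g z \<bullet> v"
        unfolding grad_def by (rule lin_grad[OF lin])
    qed
    then show ?thesis using d by simp
  qed
  have dGf: "(Gf has_derivative (\<lambda>h. grad g (Pmap x) \<bullet> Pmap h + k * h $ None)) (at x)" for x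
  proof -
    have "(Pmap has_derivative Pmap) (at x)"
      using lin_Pmap linear_conv_bounded_linear bounded_linear_imp_has_derivative by blast
    from diff_chain_at[OF this dgg]
    have a: "((\<lambda>y. g (Pmap y)) has_derivative (\<lambda>h. grad g (Pmap x) \<bullet> Pmap h)) (at x)"
      by (simp add: o_def)
    have "linear (\<lambda>y::real^'m option. k * y $ None)"
      by (rule linearI) (simp_all add: algebra_simps)
    then have "bounded_linear (\<lambda>y::real^'m option. k * y $ None)"
      by (simp add: linear_conv_bounded_linear)
    then have b: "((\<lambda>y::real^'m option. k * y $ None) has_derivative (\<lambda>h. k * h $ None)) (at x)"
      by (rule bounded_linear_imp_has_derivative)
    show ?thesis unfolding Gf_def by (rule has_derivative_add[OF a b])
  qed
  define Pm where "Pm = matrix (Pmap :: real^'m option \<Rightarrow> real^'m)"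
  have Pm: "Pmap y = Pm *v y" for y by (simp add: Pm_def matrix_works_real lin_Pmap)
  have fx: "f x = transpose Pm *v grad g (Pm *v x) + k *\<^sub>R axis None 1" for x
  proof (rule vec_eq_by_inner)
    fix h
    have "(\<lambda>h. f x \<bullet> h) = (\<lambda>h. grad g (Pmap x) \<bullet> Pmap h + k * h $ None)"
      by (rule has_derivative_unique[OF H dGf])
    then have "f x \<bullet> h = grad g (Pmap x) \<bullet> Pmap h + k * h $ None" by metis
    also have "\<dots> = (transpose Pm *v grad g (Pm *v x) + k *\<^sub>R axis None 1) \<bullet> h"
    proof -
      have "(transpose Pm *v grad g (Pm *v x)) \<bullet> h = (grad g (Pm *v x) v* Pm) \<bullet> h"
        using vector_transpose_matrix[of "grad g (Pm *v x)" "transpose Pm"] by simp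
      also have "\<dots> = grad g (Pm *v x) \<bullet> (Pm *v h)" by (rule dot_lmul_matrix)
      finally show ?thesis by (simp add: Pm inner_add_left inner_axis')
    qed
    finally show "f x \<bullet> h = (transpose Pm *v grad g (Pm *v x) + k *\<^sub>R axis None 1) \<bullet> h" .
  qed
  have feq: "f = (\<lambda>x. transpose Pm *v grad g (Pm *v x) + k *\<^sub>R axis None 1)"
    using fx by (simp add: fun_eq_iff)
  have C1g: "C1_map (grad g)" using g by (simp add: C2_fun_def)
  have C: "C1_map f" unfolding feq by (rule C1_comp(1)[OF C1g])
  have Jf: "?J x = transpose Pm ** jacobian (grad g) (at (Pm *v x)) ** Pm" for x
    unfolding feq by (rule C1_comp(2)[OF C1g])
  have rows: "?J x *v onev = 0" for x
  proof -
    have P1: "Pm *v onev = 0" by (rule trans[OF Pm[of onev, symmetric] Pmap_onev])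
    show ?thesis by (simp add: Jf matrix_vector_mul_assoc[symmetric] P1)
  qed
  have sym: "transpose (?J x) = ?J x" for x
    using clairaut[OF H C] by (simp add: vec_eq_iff transpose_def)
  have "laplacian_matrix (?J x)" for x
    unfolding laplacian_matrix_def
  proof
    show "transpose (?J x) = ?J x" by (rule sym)
    show "\<forall>i. ?J x $ i $ i = - (\<Sum>j\<in>UNIV - {i}. ?J x $ i $ j)"
      using row_sum_iff[of "?J x"] rows[of x] by simp
  qed
  then show "laplacian_map f" by (simp add: laplacian_map_def C)
qed

end
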